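(* Let $i\ge 3$ and $k\ge 3$ be integers. Then: (a) $g_2(F_i,F_{i+2},F_{i+k})=(3F_i-1)F_{i+2}-F_i$ whenever $k\ge i+3$; (b) $g_2(F_i,F_{i+2},F_{2i+2})=(F_{i-2}-1)F_{i+2}+F_{2i+2}-F_i$ if $i$ is odd, and $g_2(F_i,F_{i+2},F_{2i+2})=(F_{i+2}-1)F_{i+2}-F_i$ if $i$ is even; (c) $g_2(F_i,F_{i+2},F_{2i+1})=(F_i-1)F_{i+2}+F_{2i+1}-F_i$; (d) $g_2(F_i,F_{i+2},F_{2i})=(2F_i-1)F_{i+2}-F_i$; (e) $g_2(F_i,F_{i+2},F_{2i-1})=(F_{i-4}-1)F_{i+2}+3F_{2i-1}-F_i$ for $i\ge 5$, and $g_2(F_4,F_6,F_7)=F_6+2F_7-F_4=31$; (f) if $r=\lfloor (F_i-1)/F_k\rfloor\ge 2$ (equivalently $k\le i-2$), then $$g_2(F_i,F_{i+2},F_{i+k})=\begin{cases}(F_i-rF_k-1)F_{i+2}+(r+2)F_{i+k}-F_i & \text{if } (F_i-rF_k)F_{i+2}\ge F_{k-2}F_i,\\ (F_k-1)F_{i+2}+(r+1)F_{i+k}-F_i & \text{if } (F_i-rF_k)F_{i+2}< F_{k-2}F_i.\end{cases}$$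
   Context: Fibonacci numbers: $F_0=0$, $F_1=1$, $F_n=F_{n-1}+F_{n-2}$. For positive integers $a_1,\dots,a_l$ with $\gcd(a_1,\dots,a_l)=1$ and an integer $n$, let $d(n;a_1,\dots,a_l)$ be the number of tuples $(x_1,\dots,x_l)$ of nonnegative integers with $a_1x_1+\dots+a_lx_l=n$. For a nonnegative integer $p$, the $p$-Frobenius number $g_p(a_1,\dots,a_l)$ is the largest integer $n$ with $d(n;a_1,\dots,a_l)\le p$. *)

theory Defs
  imports "HOL-Number_Theory.Fib"
begin

definition F :: "nat \<Rightarrow> int" where
  "F n = int (fib n)"

definition num_reps :: "int \<Rightarrow> int list \<Rightarrow> nat" where
  "num_reps n as = card {xs :: nat list. length xs = length as \<and>
      (\<Sum>j<length as. as ! j * int (xs ! j)) = n}"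

definition p_frobenius :: "nat \<Rightarrow> int list \<Rightarrow> int" where
  "p_frobenius p as = (GREATEST n :: int. num_reps n as \<le> p)"

end

theory Submission
  imports Defs "HOL-Number_Theory.Cong"
begin


definition reps :: "int \<Rightarrow> int \<Rightarrow> int \<Rightarrow> int \<Rightarrow> (nat\<times>nat\<times>nat) set" where
  "reps a b c n = {(x,y,z). a*int x + b*int y + c*int z = n}"

lemma num_reps_eq: "num_reps n [a,b,c] = card (reps a b c n)"
proof -
  have e: "{xs :: nat list. length xs = length [a,b,c] \<and>
      (\<Sum>j<length [a,b,c]. [a,b,c] ! j * int (xs ! j)) = n} = (\<lambda>(x,y,z). [x,y,z]) ` reps a b c n"
  proof (intro set_eqI iffI)
    fix xs assume "xs \<in> {xs :: nat list. length xs = length [a,b,c] \<and>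
      (\<Sum>j<length [a,b,c]. [a,b,c] ! j * int (xs ! j)) = n}"
    then have l: "length xs = 3" and s: "a * int (xs!0) + b * int (xs!1) + c * int (xs!2) = n"
      by (auto simp: numeral_3_eq_3 numeral_2_eq_2 lessThan_Suc add.commute add.left_commute)
    have "xs = [xs!0, xs!1, xs!2]" using l
      by (cases xs; cases "tl xs"; cases "tl (tl xs)"; auto)
    then show "xs \<in> (\<lambda>(x,y,z). [x,y,z]) ` reps a b c n" using s
      by (auto simp: reps_def image_iff intro!: exI[of _ "(xs!0, xs!1, xs!2)"])
  next
    fix xs assume "xs \<in> (\<lambda>(x,y,z). [x,y,z]) ` reps a b c n"
    then show "xs \<in> {xs :: nat list. length xs = length [a,b,c] \<and>
      (\<Sum>j<length [a,b,c]. [a,b,c] ! j * int (xs ! j)) = n}"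
      by (auto simp: reps_def numeral_3_eq_3 lessThan_Suc add.commute add.left_commute)
  qed
  have i: "inj_on (\<lambda>(x,y,z). [x::nat,y,z]) (reps a b c n)"
    by (auto simp: inj_on_def)
  show ?thesis unfolding num_reps_def e using card_image[OF i] by simp
qed

lemma reps_finite:
  assumes "a > 0" "b > 0" "c > 0"
  shows "finite (reps a b c n)"
proof -
  have "reps a b c n \<subseteq> {..nat n} \<times> {..nat n} \<times> {..nat n}"
  proof
    fix t assume "t \<in> reps a b c n"
    then obtain x y z where t: "t = (x,y,z)" and e: "a*int x + b*int y + c*int z = n"
      by (auto simp: reps_def)
    have "int x \<le> a * int x" "int y \<le> b * int y" "int z \<le> c * int z"
      using assms by (simp_all add: mult_le_cancel_right1)
    moreover have "0 \<le> a * int x" "0 \<le> b * int y" "0 \<le> c * int z" using assms by simp_all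
    ultimately have "int x \<le> n" "int y \<le> n" "int z \<le> n" using e by linarith+
    then show "t \<in> {..nat n} \<times> {..nat n} \<times> {..nat n}" using t by auto
  qed
  then show ?thesis by (rule finite_subset) auto
qed

definition good :: "int \<Rightarrow> int \<Rightarrow> int \<Rightarrow> int \<Rightarrow> int \<Rightarrow> int \<Rightarrow> int \<times> int \<Rightarrow> bool" where
  "good a b c e M t p = (fst p \<ge> 0 \<and> snd p \<ge> 0 \<and> [fst p + snd p * e = t] (mod a)
      \<and> fst p * b + snd p * c \<le> M)"

lemma congI': "x = y + a*k \<Longrightarrow> [x = y] (mod (a::int))"
  by (simp add: cong_iff_dvd_diff)

lemma goodI: "0 \<le> y \<Longrightarrow> 0 \<le> z \<Longrightarrow> [y + z*e = t] (mod a) \<Longrightarrow> y*b + z*c \<le> M \<Longrightarrow> good a b c e M t (y,z)"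
  by (simp add: good_def)

lemma ex3I: "good a b c e M t p1 \<Longrightarrow> good a b c e M t p2 \<Longrightarrow> good a b c e M t p3 \<Longrightarrow> p1 \<noteq> p2 \<Longrightarrow> p1 \<noteq> p3 \<Longrightarrow> p2 \<noteq> p3 \<Longrightarrow>
  \<exists>p1 p2 p3. p1 \<noteq> p2 \<and> p1 \<noteq> p3 \<and> p2 \<noteq> p3 \<and> good a b c e M t p1 \<and> good a b c e M t p2 \<and> good a b c e M t p3"
  by blast

lemma frame:
  fixes a b c e M tz :: int and Pa Pb :: "int \<times> int"
  assumes pos: "a > 0" "b > 0" "c > 0" and cop: "coprime a b" and ce: "[c = e*b] (mod a)"
    and cov: "\<And>t. 0 \<le> t \<Longrightarrow> t < a \<Longrightarrow> \<exists>p1 p2 p3. p1 \<noteq> p2 \<and> p1 \<noteq> p3 \<and> p2 \<noteq> p3 \<and>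
        good a b c e M t p1 \<and> good a b c e M t p2 \<and> good a b c e M t p3"
    and tz: "[tz * b = M - a] (mod a)"
    and exc: "\<And>y z. 0 \<le> y \<Longrightarrow> 0 \<le> z \<Longrightarrow> [y + z*e = tz] (mod a) \<Longrightarrow> y*b + z*c \<le> M - a
        \<Longrightarrow> (y,z) = Pa \<or> (y,z) = Pb"
  shows "p_frobenius 2 [a,b,c] = M - a"
proof -
  have cg: "[y*b + z*c = (y + z*e)*b] (mod a)" for y z
  proof -
    have "[y*b + z*c = y*b + z*(e*b)] (mod a)" by (intro cong_add cong_refl cong_mult ce)
    then show ?thesis by (simp add: algebra_simps)
  qed
  show ?thesis
  unfolding p_frobenius_def
proof (rule Greatest_equality)
  let ?g = "\<lambda>(y::int,z::int). (nat ((M - a - y*b - z*c) div a), nat y, nat z)"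
  have sub: "reps a b c (M - a) \<subseteq> ?g ` {Pa, Pb}"
  proof
    fix t assume "t \<in> reps a b c (M - a)"
    then obtain x y z where tt: "t = (x,y,z)" and e: "a*int x + b*int y + c*int z = M - a"
      by (auto simp: reps_def)
    have "[int y * b + int z * c = M - a] (mod a)"
    proof -
      have "[a * int x + (int y * b + int z * c) = 0 + (int y * b + int z * c)] (mod a)"
        by (intro cong_add cong_refl) (simp add: cong_0_iff)
      moreover have "M - a = a * int x + (int y * b + int z * c)" using e by (simp add: algebra_simps)
      ultimately have "[M - a = int y * b + int z * c] (mod a)" by simp
      then show ?thesis by (rule cong_sym)
    qed
    then have "[(int y + int z * e) * b = tz * b] (mod a)"
      using cg tz by (meson cong_sym cong_trans)
    then have "[int y + int z * e = tz] (mod a)"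
      using cop by (metis cong_mult_rcancel coprime_commute)
    moreover have "int y * b + int z * c \<le> M - a"
    proof -
      have "0 \<le> a * int x" using pos by simp
      then show ?thesis using e by (simp add: algebra_simps)
    qed
    ultimately have "(int y, int z) = Pa \<or> (int y, int z) = Pb" using exc by simp
    moreover have "x = nat ((M - a - int y*b - int z*c) div a)"
    proof -
      have "M - a - int y*b - int z*c = a * int x" using e by (simp add: algebra_simps)
      then show ?thesis using pos by simp
    qed
    ultimately show "t \<in> ?g ` {Pa, Pb}" using tt by (auto simp: image_iff)
  qed
  have "card (reps a b c (M - a)) \<le> card (?g ` {Pa,Pb})"
    by (rule card_mono[OF _ sub]) simp
  also have "\<dots> \<le> card {Pa,Pb}" by (rule card_image_le) simp
  also have "\<dots> \<le> 2" by (simp add: card_insert_if)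
  finally show "num_reps (M - a) [a,b,c] \<le> 2" by (simp add: num_reps_eq)
next
  fix n assume le2: "num_reps n [a,b,c] \<le> 2"
  show "n \<le> M - a"
  proof (rule ccontr)
    assume "\<not> n \<le> M - a"
    then have nM: "n > M - a" by simp
    obtain t where t: "0 \<le> t" "t < a" "[t * b = n] (mod a)"
    proof -
      have "coprime b a" using cop by (simp add: coprime_commute)
      from cong_solve_coprime_int[OF this] obtain s where s: "[b * s = 1] (mod a)" by blast
      have "[(n*s) mod a * b = n * (b * s)] (mod a)"
        by (metis (no_types, lifting) cong_mod_left cong_mult cong_refl mult.commute mult.left_commute)
      also have "[n * (b*s) = n * 1] (mod a)" by (intro cong_mult cong_refl s)
      finally show ?thesis using that[of "(n*s) mod a"] pos by simp
    qed
    obtain p1 p2 p3 where ps: "p1 \<noteq> p2" "p1 \<noteq> p3" "p2 \<noteq> p3"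
        "good a b c e M t p1" "good a b c e M t p2" "good a b c e M t p3"
      using cov[OF t(1,2)] by blast
    let ?h = "\<lambda>(y::int,z::int). (nat ((n - y*b - z*c) div a), nat y, nat z)"
    have inr: "?h p \<in> reps a b c n" if "good a b c e M t p" for p
    proof -
      obtain y z where p: "p = (y,z)" by fastforce
      have g: "y \<ge> 0" "z \<ge> 0" "[y + z*e = t] (mod a)" "y*b + z*c \<le> M"
        using that p by (auto simp: good_def)
      have "[y*b + z*c = t*b] (mod a)" using cg[of y z] g(3)
        by (meson cong_scalar_right cong_trans)
      then have "[y*b + z*c = n] (mod a)" using t(3) by (rule cong_trans)
      then have d: "a dvd (n - y*b - z*c)"
        by (metis cong_iff_dvd_diff cong_sym diff_diff_eq)
      then obtain q where q: "n - y*b - z*c = a * q" by blast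
      have "a * q > - a" using q g(4) nM by linarith
      then have "a * q > a * (-1)" by simp
      then have "q > -1" using pos by (metis mult_less_cancel_left_pos)
      then have "q \<ge> 0" by simp
      then show ?thesis using p q pos g(1,2) by (simp add: reps_def algebra_simps)
    qed
    have inj: "inj_on ?h {p. good a b c e M t p}"
    proof (rule inj_onI)
      fix p q assume "p \<in> {p. good a b c e M t p}" "q \<in> {p. good a b c e M t p}" "?h p = ?h q"
      then show "p = q" unfolding good_def by (cases p; cases q) auto
    qed
    have "?h ` {p1,p2,p3} \<subseteq> reps a b c n" using inr ps by auto
    then have "card (?h ` {p1,p2,p3}) \<le> card (reps a b c n)"
      by (intro card_mono reps_finite pos)
    moreover have "card (?h ` {p1,p2,p3}) = 3"
    proof -
      have "inj_on ?h {p1,p2,p3}" by (rule inj_on_subset[OF inj]) (use ps in auto)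
      then show ?thesis using ps by (simp add: card_image)
    qed
    ultimately show False using le2 by (simp add: num_reps_eq)
  qed
qed
qed



lemma cong_ex_int: "[y = t] (mod (a::int)) \<Longrightarrow> \<exists>j. y = t + j*a"
  by (metis cong_iff_lin cong_sym mult.commute)

lemma caseD:
  fixes A B c :: int
  assumes A: "A \<ge> 2" and B: "B > 0" and c: "c > 0" and cop: "coprime A B"
    and dv: "A dvd c" and c1: "c \<le> A*B" and c2: "A*B - A < 2*c"
  shows "p_frobenius 2 [A,B,c] = (2*A - 1)*B - A"
proof (rule frame[where e=0 and tz="A-1" and Pa="(A-1,0)" and Pb="(A-1,1)"])
  show "A > 0" "B > 0" "c > 0" "coprime A B" using assms by auto
  show "[c = 0*B] (mod A)" using dv by (simp add: cong_0_iff)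
  show "[(A - 1) * B = (2 * A - 1) * B - A] (mod A)"
  proof -
    have "(2 * A - 1) * B - A = (A - 1) * B + A*(B - 1)" by (simp add: algebra_simps)
    then show ?thesis by (simp add: cong_iff_dvd_diff)
  qed
next
  fix t assume t: "0 \<le> t" "t < A"
  have "tB": "t*B \<le> (A-1)*B" using t B by (intro mult_right_mono) auto
  have AB: "A*B \<ge> 0" using A B by simp
  have eM: "(2*A-1)*B = (A-1)*B + A*B" by (simp add: algebra_simps)
  have eA: "(t+A)*B = t*B + A*B" by (simp add: algebra_simps)
  show "\<exists>p1 p2 p3. p1 \<noteq> p2 \<and> p1 \<noteq> p3 \<and> p2 \<noteq> p3 \<and>
        good A B c 0 ((2*A - 1)*B) t p1 \<and> good A B c 0 ((2*A - 1)*B) t p2 \<and> good A B c 0 ((2*A - 1)*B) t p3"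
  proof (intro exI conjI)
    have "t * B + 0 * c \<le> (2 * A - 1) * B" using t tB AB eM by linarith
    then show "good A B c 0 ((2*A - 1)*B) t (t,0)" using t by (intro goodI) auto
    have "t * B + 1 * c \<le> (2 * A - 1) * B" using t tB c1 AB eM by linarith
    then show "good A B c 0 ((2*A - 1)*B) t (t,1)" using t by (intro goodI) auto
    have "(t+A) * B + 0 * c = t*B + A*B" by (simp add: algebra_simps)
    also have "\<dots> \<le> (A-1)*B + A*B" using tB by simp
    also have "\<dots> = (2 * A - 1) * B" by (simp add: algebra_simps)
    finally have "(t+A) * B + 0 * c \<le> (2 * A - 1) * B" .
    then show "good A B c 0 ((2*A - 1)*B) t (t+A,0)" using t A by (intro goodI) (auto simp: cong_iff_dvd_diff)
  qed (use A in auto)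
next
  fix y z assume yz: "0 \<le> y" "0 \<le> z" "[y + z * 0 = A - 1] (mod A)" "y * B + z * c \<le> (2 * A - 1) * B - A"
  then obtain j where j: "y = A - 1 + j*A" using cong_ex_int by fastforce
  have j0: "j \<ge> 0"
  proof (rule ccontr)
    assume "\<not> j \<ge> 0" then have "j*A \<le> -1*A" using A by (intro mult_right_mono) auto
    then show False using j yz by simp
  qed
  have zc: "z*c \<ge> 0" using yz c by simp
  have j1: "j = 0"
  proof (rule ccontr)
    assume "j \<noteq> 0" then have "j*A \<ge> 1*A" using j0 A by (intro mult_right_mono) auto
    then have "y \<ge> 2*A - 1" using j by simp
    then have "y*B \<ge> (2*A-1)*B" using B by (intro mult_right_mono) auto
    then show False using yz zc A by linarith
  qed
  then have y: "y = A - 1" using j by simp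
  have "z \<le> 1"
  proof (rule ccontr)
    assume "\<not> z \<le> 1" then have "z*c \<ge> 2*c" using c by (intro mult_right_mono) auto
    then show False using yz y c2 by (simp add: algebra_simps)
  qed
  then have "z = 0 \<or> z = 1" using yz by auto
  then show "(y, z) = (A - 1, 0) \<or> (y, z) = (A - 1, 1)" using y by auto
qed



lemma F_SS: "F (Suc (Suc n)) = F (Suc n) + F n"
  by (simp add: F_def)
lemma F_plus2: "F (n+2) = F (n+1) + F n"
  by (simp add: F_def fib_plus_2)
lemma F_0[simp]: "F 0 = 0" and F_1[simp]: "F 1 = 1" and F_2[simp]: "F 2 = 1"
  by (simp_all add: F_def)
lemma F_nonneg[simp]: "F n \<ge> 0" by (simp add: F_def)
lemma F_pos: "n > 0 \<Longrightarrow> F n > 0" by (simp add: F_def fib_neq_0_nat)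
lemma F_mono: "m \<le> n \<Longrightarrow> F m \<le> F n" by (simp add: F_def fib_mono)
lemma F_add: "F (m + n + 1) = F (m+1) * F (n+1) + F m * F n"
  unfolding F_def using fib_add[of n m] by (simp add: ac_simps)
lemma F_cassini: "F (n+2) * F n - (F (n+1))^2 = - ((-1)^n)"
  using fib_Cassini_int[of n] by (simp add: F_def)
lemma F_coprime2: "coprime (F n) (F (n+2))"
proof -
  have "gcd (fib n) (fib (n+2)) = fib (gcd n (n+2))" by (simp add: fib_gcd)
  also have "gcd n (n+2) = gcd n 2" by (metis gcd_add2 gcd.commute add.commute)
  also have "fib (gcd n 2) = 1"
  proof -
    have "gcd n 2 \<le> 2" "gcd n 2 > 0" by (simp_all add: gcd_le2_nat)
    then have "gcd n 2 = 1 \<or> gcd n 2 = 2" by linarith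
    then show ?thesis by auto
  qed
  finally have "gcd (fib n) (fib (n+2)) = 1" .
  then have "coprime (fib n) (fib (n+2))" by (simp only: coprime_iff_gcd_eq_1)
  then show ?thesis unfolding F_def by (simp only: coprime_int_iff)
qed



lemma partD:
  assumes "i \<ge> 3"
  shows "p_frobenius 2 [F i, F (i+2), F (2*i)] = (2 * F i - 1) * F (i+2) - F i"
proof -
  define n where "n = i - 1"
  have n: "i = n + 1" "n \<ge> 2" using assms by (simp_all add: n_def)
  define x where "x = F n" 
  define y where "y = F (n+1)"
  have F2: "F (n+2) = y + x" using F_plus2[of n] by (simp add: x_def y_def)
  have F3: "F (n+3) = 2*y + x" using F_plus2[of "n+1"] F2 by (simp add: y_def add.commute numeral_3_eq_3)
  have Fc: "F (2*i) = y*(y+x) + x*y"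
  proof -
    have e: "2*i = (n+1)+n+1" using n by simp
    have "F (2*i) = F (n+1+1) * F (n+1) + F (n+1) * F n" unfolding e by (rule F_add)
    then show ?thesis using F2 by (simp add: x_def y_def ac_simps)
  qed
  have xy: "x \<le> y" unfolding x_def y_def by (rule F_mono) simp
  have x1: "x \<ge> 1" using F_pos[of n] n by (simp add: x_def)
  have y2: "y \<ge> 2" using F_mono[of 3 "n+1"] n by (simp add: y_def eval_nat_numeral F_def)
  have "p_frobenius 2 [y, 2*y+x, y*(y+x) + x*y] = (2 * y - 1) * (2*y+x) - y"
  proof (rule caseD)
    show "y \<ge> 2" by fact
    show "2*y + x > 0" "y*(y+x) + x*y > 0" using x1 y2 by (auto intro!: add_pos_pos mult_pos_pos)
    show "coprime y (2 * y + x)" using F_coprime2[of "n+1"] F3 by (simp add: y_def add.commute numeral_3_eq_3)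
    show "y dvd y * (y + x) + x * y" by simp
    show "y * (y + x) + x * y \<le> y * (2 * y + x)" using xy y2 by (simp add: algebra_simps)
    have "y * (2 * y + x) - y < y * (2 * y + x)" using y2 by simp
    also have "y * (2 * y + x) \<le> 2 * (y * (y + x) + x * y)"
      using xy y2 x1 by (simp add: algebra_simps)
    finally show "y * (2 * y + x) - y < 2 * (y * (y + x) + x * y)" .
  qed
  then show ?thesis using n F3 Fc by (simp add: y_def add.commute numeral_3_eq_3)
qed



lemma caseC:
  fixes A B c P :: int
  assumes P1: "P \<ge> 1" and PA: "P < A" and B: "B > 0" and cop: "coprime A B"
    and ce: "[c = P*B] (mod A)" and c1: "A*B \<le> c" and PBc: "P*B < c"
    and c2: "c - P*B < A*B + A"
  shows "p_frobenius 2 [A,B,c] = (A - 1)*B + c - A"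
proof (rule frame[where e=P and tz="P-1" and Pa="(P-1,0)" and Pb="(P-1+A,0)"])
  have A: "A \<ge> 2" using P1 PA by simp
  have AB: "A*B > 0" using A B by simp
  show "A > 0" "B > 0" "coprime A B" "[c = P*B] (mod A)" using assms A by auto
  show "c > 0" using AB c1 by linarith
  show "[(P - 1) * B = (A - 1) * B + c - A] (mod A)"
  proof -
    have "[(A - 1) * B + c - A = (A - 1) * B + P*B - A] (mod A)"
      by (intro cong_diff cong_add cong_refl ce)
    moreover have "[(A - 1) * B + P*B - A = (P - 1) * B] (mod A)" by (rule congI'[where k="B-1"]) (simp add: algebra_simps)
    ultimately show ?thesis by (meson cong_sym cong_trans)
  qed
next
  fix t assume t: "0 \<le> t" "t < A"
  let ?M = "(A - 1)*B + c"
  have AB: "A*B > 0" using t B by simp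
  have w0: "t*B \<le> (A-1)*B" using t B by (intro mult_right_mono) auto
  have wA: "(t+A)*B \<le> ?M"
  proof -
    have "(t+A)*B = t*B + A*B" by (simp add: algebra_simps)
    also have "\<dots> \<le> (A-1)*B + c" using w0 c1 by linarith
    finally show ?thesis .
  qed
  have g0: "good A B c P ?M t (t,0)" using t w0 c1 AB by (intro goodI) auto
  have gA: "good A B c P ?M t (t+A,0)" using t wA by (intro goodI) (auto simp: cong_iff_dvd_diff)
  show "\<exists>p1 p2 p3. p1 \<noteq> p2 \<and> p1 \<noteq> p3 \<and> p2 \<noteq> p3 \<and>
        good A B c P ?M t p1 \<and> good A B c P ?M t p2 \<and> good A B c P ?M t p3"
  proof (cases "t < P")
    case True
    have "(t + (A - P))*B \<le> (A-1)*B" using True t B by (intro mult_right_mono) auto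
    then have "good A B c P ?M t (t + (A-P), 1)" using t PA
      by (intro goodI) (auto simp: cong_iff_dvd_diff)
    then show ?thesis by (rule ex3I[OF g0 gA]) (use t PA in auto)
  next
    case False
    have "(t - P)*B \<le> (A-1)*B" using False t B P1 by (intro mult_right_mono) auto
    then have "good A B c P ?M t (t - P, 1)" using t False
      by (intro goodI) auto
    then show ?thesis by (rule ex3I[OF g0 gA]) (use t PA in auto)
  qed
next
  fix y z assume yz: "0 \<le> y" "0 \<le> z" "[y + z * P = P - 1] (mod A)" "y * B + z * c \<le> (A - 1) * B + c - A"
  obtain j where j: "y + z*P = P - 1 + j*A" using cong_ex_int[OF yz(3)] by blast
  define k where "k = c - P*B"
  have k0: "k > 0" using PBc by (simp add: k_def)
  have W: "j*(A*B) + z*k \<le> A*B + k - A"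
  proof -
    have "y*B + z*c = (P - 1)*B + j*(A*B) + z*k"
    proof -
      have yy: "y = P - 1 + j*A - z*P" using j by simp
      show ?thesis by (simp only: yy) (simp add: k_def algebra_simps)
    qed
    moreover have "(A - 1) * B + c - A = (P-1)*B + A*B + k - A" by (simp add: k_def algebra_simps)
    ultimately show ?thesis using yz(4) by linarith
  qed
  have Y: "z*P \<le> P - 1 + j*A" using j yz(1) by linarith
  have zk: "z*k \<ge> 0" using yz(2) k0 by simp
  have zP: "z*P \<ge> 0" using yz(2) P1 by simp
  have AB: "A*B > 0" using P1 PA B by simp
  have "j \<ge> 0"
  proof (rule ccontr)
    assume "\<not> j \<ge> 0" then have "j*A \<le> (-1)*A" using PA P1 by (intro mult_right_mono) auto
    then show False using Y zP PA by linarith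
  qed
  moreover have "j \<le> 1"
  proof (rule ccontr)
    assume "\<not> j \<le> 1" then have "j*(A*B) \<ge> 2*(A*B)" using AB by (intro mult_right_mono) auto
    then show False using W zk c2 k_def by linarith
  qed
  ultimately have "j = 0 \<or> j = 1" by auto
  then show "(y, z) = (P - 1, 0) \<or> (y, z) = (P - 1 + A, 0)"
  proof
    assume j0: "j = 0"
    have "z = 0"
    proof (rule ccontr)
      assume "z \<noteq> 0" then have "z*P \<ge> 1*P" using yz(2) P1 by (intro mult_right_mono) auto
      then show False using Y j0 by simp
    qed
    then show ?thesis using j j0 by simp
  next
    assume j1: "j = 1"
    have "z = 0"
    proof (rule ccontr)
      assume "z \<noteq> 0" then have "z*k \<ge> 1*k" using yz(2) k0 by (intro mult_right_mono) auto
      then show False using W j1 PA P1 by simp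
    qed
    then show ?thesis using j j1 by simp
  qed
qed



lemma caseA:
  fixes A B c e :: int
  assumes A: "A \<ge> 1" and B: "B > 0" and cop: "coprime A B"
    and ce: "[c = e*B] (mod A)" and c1: "(3*A - 1)*B - A < c"
  shows "p_frobenius 2 [A,B,c] = (3*A - 1)*B - A"
proof (rule frame[where e=e and tz="A-1" and Pa="(A-1,0)" and Pb="(2*A-1,0)"])
  have AB: "A*B > 0" using A B by simp
  show "A > 0" "B > 0" "coprime A B" "[c = e*B] (mod A)" using assms by auto
  have "(3*A - 1)*B - A = A*B + (2*(A*B) - B - A)" by (simp add: algebra_simps)
  moreover have "2*(A*B) - B - A \<ge> 0"
  proof -
    have "A*B \<ge> 1*B" using A B by (intro mult_right_mono) auto
    moreover have "A*B \<ge> A*1" using A B by (intro mult_left_mono) auto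
    ultimately show ?thesis by linarith
  qed
  ultimately show "c > 0" using c1 AB by linarith
  show "[(A - 1) * B = (3 * A - 1) * B - A] (mod A)"
    by (rule cong_sym, rule congI'[where k="2*B-1"]) (simp add: algebra_simps)
next
  fix t assume t: "0 \<le> t" "t < A"
  let ?M = "(3*A - 1)*B"
  have w: "(t + 2*A)*B \<le> ?M" using t B by (intro mult_right_mono) auto
  have w1: "(t + A)*B \<le> (t + 2*A)*B" "t*B \<le> (t + A)*B" using t B by (intro mult_right_mono; simp)+
  have g0: "good A B c e ?M t (t,0)" using t w w1 by (intro goodI) auto
  have g1: "good A B c e ?M t (t+A,0)" using t w w1 by (intro goodI) (auto simp: cong_iff_dvd_diff)
  have g2: "good A B c e ?M t (t+2*A,0)" using t w w1 by (intro goodI) (auto simp: cong_iff_dvd_diff)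
  show "\<exists>p1 p2 p3. p1 \<noteq> p2 \<and> p1 \<noteq> p3 \<and> p2 \<noteq> p3 \<and>
        good A B c e ?M t p1 \<and> good A B c e ?M t p2 \<and> good A B c e ?M t p3"
    by (rule ex3I[OF g0 g1 g2]) (use t in auto)
next
  fix y z assume yz: "0 \<le> y" "0 \<le> z" "[y + z * e = A - 1] (mod A)" "y * B + z * c \<le> (3*A - 1) * B - A"
  have yB: "y*B \<ge> 0" using yz B by simp
  have cpos: "c > 0"
  proof -
    have "A*B \<ge> 1*B" using A B by (intro mult_right_mono) auto
    moreover have "A*B \<ge> A*1" using A B by (intro mult_left_mono) auto
    moreover have "(3*A - 1)*B - A = A*B + (2*(A*B) - B - A)" by (simp add: algebra_simps)
    ultimately show ?thesis using c1 A B by linarith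
  qed
  have z0: "z = 0"
  proof (rule ccontr)
    assume "z \<noteq> 0" then have "z*c \<ge> 1*c" using yz(2) cpos
      by (intro mult_right_mono) auto
    then show False using yz(4) yB c1 by linarith
  qed
  then obtain j where j: "y = A - 1 + j*A" using cong_ex_int yz(3) by fastforce
  have "j \<ge> 0"
  proof (rule ccontr)
    assume "\<not> j \<ge> 0" then have "j*A \<le> (-1)*A" using A by (intro mult_right_mono) auto
    then show False using j yz by simp
  qed
  moreover have "j \<le> 1"
  proof (rule ccontr)
    assume "\<not> j \<le> 1" then have "j*A \<ge> 2*A" using A by (intro mult_right_mono) auto
    then have "y*B \<ge> (3*A - 1)*B" using j B by (intro mult_right_mono) auto
    then show False using yz(4) z0 A by simp
  qed
  ultimately have "j = 0 \<or> j = 1" by auto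
  then show "(y, z) = (A - 1, 0) \<or> (y, z) = (2*A - 1, 0)" using j z0 by auto
qed

lemma caseB_even:
  fixes A B c P :: int
  assumes P1: "P \<ge> 1" and PA: "P < A" and BA: "B = 2*A + P" and cop: "coprime A B"
    and ce: "[c = P*B] (mod A)" and c0: "c \<ge> 0" and k1: "c - P*B > A*B - A"
    and cas: "B*B - (A - P)*B - c = 1"
  shows "p_frobenius 2 [A,B,c] = (B - 1)*B - A"
proof (rule frame[where e=P and tz="P-1" and Pa="(P-1,0)" and Pb="(P-1+A,0)"])
  have A: "A \<ge> 2" using P1 PA by simp
  have B: "B > 0" using BA A P1 by simp
  show "A > 0" "B > 0" "coprime A B" "[c = P*B] (mod A)" using assms A B by auto
  show "c > 0"
  proof -
    have "A*B \<ge> A*1" using A B by (intro mult_left_mono) auto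
    then show ?thesis using k1 P1 B c0 by (smt (verit) mult_pos_pos)
  qed
  show "[(P - 1) * B = (B - 1) * B - A] (mod A)"
    by (rule cong_sym, rule congI'[where k="2*B-1"]) (simp add: BA algebra_simps)
next
  fix t assume t: "0 \<le> t" "t < A"
  have B: "B > 0" using BA t P1 by simp
  let ?M = "(B - 1)*B"
  have w1: "t*B \<le> (t + A)*B" "(t + A)*B \<le> ?M" using t B BA P1 by (intro mult_right_mono; simp)+
  have g0: "good A B c P ?M t (t,0)" using t w1 by (intro goodI) auto
  have g1: "good A B c P ?M t (t+A,0)" using t w1 by (intro goodI) (auto simp: cong_iff_dvd_diff)
  show "\<exists>p1 p2 p3. p1 \<noteq> p2 \<and> p1 \<noteq> p3 \<and> p2 \<noteq> p3 \<and>
        good A B c P ?M t p1 \<and> good A B c P ?M t p2 \<and> good A B c P ?M t p3"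
  proof (cases "t < P")
    case True
    have "(t + 2*A)*B \<le> ?M" using True t B BA by (intro mult_right_mono) auto
    then have "good A B c P ?M t (t + 2*A, 0)" using t by (intro goodI) (auto simp: cong_iff_dvd_diff)
    then show ?thesis by (rule ex3I[OF g0 g1]) (use t in auto)
  next
    case False
    have "(t - P)*B \<le> (A - P - 1)*B" using False t B by (intro mult_right_mono) auto
    moreover have "(A - P - 1)*B + c = ?M - 1" using cas by (simp add: algebra_simps)
    ultimately have "(t - P)*B + 1 * c \<le> ?M" by linarith
    then have "good A B c P ?M t (t - P, 1)" using t False by (intro goodI) auto
    then show ?thesis by (rule ex3I[OF g0 g1]) (use t PA in auto)
  qed
next
  fix y z assume yz: "0 \<le> y" "0 \<le> z" "[y + z * P = P - 1] (mod A)" "y * B + z * c \<le> (B - 1) * B - A"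
  obtain j where j: "y + z*P = P - 1 + j*A" using cong_ex_int[OF yz(3)] by blast
  define k where "k = c - P*B"
  have W: "j*(A*B) + z*k \<le> 2*(A*B) - A"
  proof -
    have yy: "y = P - 1 + j*A - z*P" using j by simp
    have "y*B + z*c = (P - 1)*B + j*(A*B) + z*k" by (simp only: yy) (simp add: k_def algebra_simps)
    moreover have "(B - 1) * B - A = (P-1)*B + 2*(A*B) - A" by (simp add: BA algebra_simps)
    ultimately show ?thesis using yz(4) by linarith
  qed
  have AB: "A*B > 0" using P1 PA BA by simp
  have k0: "k > 0"
  proof -
    have "A*B \<ge> A*1" using P1 PA BA by (intro mult_left_mono) auto
    then show ?thesis using k1 k_def by linarith
  qed
  have Y: "z*P \<le> P - 1 + j*A" using j yz(1) by linarith
  have zk: "z*k \<ge> 0" using yz(2) k0 by simp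
  have zP: "z*P \<ge> 0" using yz(2) P1 by simp
  have "j \<ge> 0"
  proof (rule ccontr)
    assume "\<not> j \<ge> 0" then have "j*A \<le> (-1)*A" using PA P1 by (intro mult_right_mono) auto
    then show False using Y zP PA by linarith
  qed
  moreover have "j \<le> 1"
  proof (rule ccontr)
    assume "\<not> j \<le> 1" then have "j*(A*B) \<ge> 2*(A*B)" using AB by (intro mult_right_mono) auto
    then show False using W zk PA P1 by linarith
  qed
  ultimately have "j = 0 \<or> j = 1" by auto
  then show "(y, z) = (P - 1, 0) \<or> (y, z) = (P - 1 + A, 0)"
  proof
    assume j0: "j = 0"
    have "z = 0"
    proof (rule ccontr)
      assume "z \<noteq> 0" then have "z*P \<ge> 1*P" using yz(2) P1 by (intro mult_right_mono) auto
      then show False using Y j0 by simp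
    qed
    then show ?thesis using j j0 by simp
  next
    assume j1: "j = 1"
    have "z = 0"
    proof (rule ccontr)
      assume "z \<noteq> 0" then have "z*k \<ge> 1*k" using yz(2) k0 by (intro mult_right_mono) auto
      then show False using W j1 k1 k_def by simp
    qed
    then show ?thesis using j j1 by simp
  qed
qed

lemma caseB_odd:
  fixes A B c P :: int
  assumes P1: "P \<ge> 1" and PA: "P < A" and BA: "B = 2*A + P" and cop: "coprime A B"
    and ce: "[c = P*B] (mod A)" and k0: "c - P*B \<ge> 0" and k1: "c - P*B < 2*(A*B) + A"
    and cas: "B*B - (A - P)*B - c = -1"
  shows "p_frobenius 2 [A,B,c] = (A - P - 1)*B + c - A"
proof (rule frame[where e=P and tz="A-1" and Pa="(A-1,0)" and Pb="(2*A-1,0)"])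
  have A: "A \<ge> 2" using P1 PA by simp
  have B: "B > 0" using BA A P1 by simp
  show "A > 0" "B > 0" "coprime A B" "[c = P*B] (mod A)" using assms A B by auto
  show "c > 0" using k0 P1 B by (smt (verit) mult_pos_pos)
  obtain q where q: "c = P*B + A*q" using ce by (metis cong_ex_int mult.commute)
  show "[(A - 1) * B = (A - P - 1) * B + c - A] (mod A)"
    by (rule cong_sym, rule congI'[where k="q - 1"]) (simp add: q algebra_simps)
next
  fix t assume t: "0 \<le> t" "t < A"
  have B: "B > 0" using BA t P1 by simp
  let ?M = "(A - P - 1)*B + c"
  have eM: "?M = (B - 1)*B + 1" using cas by (simp add: algebra_simps)
  have w1: "t*B \<le> (t + A)*B" "(t + A)*B \<le> (B - 1)*B" using t B BA P1 by (intro mult_right_mono; simp)+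
  have g0: "good A B c P ?M t (t,0)" using t w1 eM by (intro goodI) auto
  have g1: "good A B c P ?M t (t+A,0)" using t w1 eM by (intro goodI) (auto simp: cong_iff_dvd_diff)
  show "\<exists>p1 p2 p3. p1 \<noteq> p2 \<and> p1 \<noteq> p3 \<and> p2 \<noteq> p3 \<and>
        good A B c P ?M t p1 \<and> good A B c P ?M t p2 \<and> good A B c P ?M t p3"
  proof (cases "t < P")
    case True
    have "(t + 2*A)*B \<le> (B-1)*B" using True t B BA by (intro mult_right_mono) auto
    then have "good A B c P ?M t (t + 2*A, 0)" using t eM by (intro goodI) (auto simp: cong_iff_dvd_diff)
    then show ?thesis by (rule ex3I[OF g0 g1]) (use t in auto)
  next
    case False
    have "(t - P)*B \<le> (A - P - 1)*B" using False t B by (intro mult_right_mono) auto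
    then have "(t - P)*B + 1 * c \<le> ?M" by linarith
    then have "good A B c P ?M t (t - P, 1)" using t False by (intro goodI) auto
    then show ?thesis by (rule ex3I[OF g0 g1]) (use t PA in auto)
  qed
next
  fix y z assume yz: "0 \<le> y" "0 \<le> z" "[y + z * P = A - 1] (mod A)" "y * B + z * c \<le> (A - P - 1) * B + c - A"
  obtain j where j: "y + z*P = A - 1 + j*A" using cong_ex_int[OF yz(3)] by blast
  define k where "k = c - P*B"
  have W: "j*(A*B) + z*k \<le> k - A"
  proof -
    have yy: "y = A - 1 + j*A - z*P" using j by simp
    have "y*B + z*c = (A - 1)*B + j*(A*B) + z*k" by (simp only: yy) (simp add: k_def algebra_simps)
    moreover have "(A - P - 1) * B + c - A = (A-1)*B + k - A" by (simp add: k_def algebra_simps)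
    ultimately show ?thesis using yz(4) by linarith
  qed
  have AB: "A*B > 0" using P1 PA BA by simp
  have Y: "z*P \<le> A - 1 + j*A" using j yz(1) by linarith
  have zk: "z*k \<ge> 0" using yz(2) k0 k_def by simp
  have zP: "z*P \<ge> 0" using yz(2) P1 by simp
  have "j \<ge> 0"
  proof (rule ccontr)
    assume "\<not> j \<ge> 0" then have "j*A \<le> (-1)*A" using PA P1 by (intro mult_right_mono) auto
    then show False using Y zP PA by linarith
  qed
  moreover have "j \<le> 1"
  proof (rule ccontr)
    assume "\<not> j \<le> 1" then have "j*(A*B) \<ge> 2*(A*B)" using AB by (intro mult_right_mono) auto
    then show False using W zk k1 k_def by linarith
  qed
  ultimately have "j = 0 \<or> j = 1" by auto
  moreover have "z = 0"
  proof (rule ccontr)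
    assume "z \<noteq> 0" then have "z*k \<ge> 1*k" using yz(2) k0 k_def by (intro mult_right_mono) auto
    moreover have "j*(A*B) \<ge> 0" using \<open>j \<ge> 0\<close> AB by simp
    ultimately show False using W PA P1 by linarith
  qed
  ultimately show "(y, z) = (A - 1, 0) \<or> (y, z) = (2*A - 1, 0)" using j by auto
qed



lemma coverF:
  fixes A B c f g r s t Mx :: int
  assumes f2: "f \<ge> 2" and g1: "g \<ge> 1" and gf: "2*g \<le> f" and r2: "r \<ge> 2" and s1: "1 \<le> s" and sf: "s \<le> f"
    and Ad: "A = r*f + s" and AB5: "5*A \<le> 2*B" and cd: "c = f*B - g*A"
    and M1: "(s-1)*B + (r+2)*c \<le> Mx" and M2: "(f-1)*B + (r+1)*c \<le> Mx"
    and t: "0 \<le> t" "t < A"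
  shows "\<exists>p1 p2 p3. p1 \<noteq> p2 \<and> p1 \<noteq> p3 \<and> p2 \<noteq> p3 \<and>
        good A B c f Mx t p1 \<and> good A B c f Mx t p2 \<and> good A B c f Mx t p3"
proof -
  have B: "B > 0" using AB5 Ad r2 f2 s1 by (smt (verit) mult_pos_pos)
  have K1: "5*(g*A) \<le> f*B"
  proof -
    have "g*(5*A) \<le> g*(2*B)" using AB5 g1 by (intro mult_left_mono) auto
    moreover have "(2*g)*B \<le> f*B" using gf B by (intro mult_right_mono) auto
    ultimately show ?thesis by (simp add: algebra_simps)
  qed
  have gA: "g*A \<ge> 0" using g1 Ad r2 f2 s1 by (smt (verit) mult_nonneg_nonneg)
  have K2: "f*B \<le> 2*c" using K1 cd gA by linarith
  have c0: "c \<ge> 0" using K2 B f2 by (smt (verit) mult_pos_pos)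
  define y where "y = t mod f"
  define z where "z = t div f"
  have tyz: "t = y + z*f" unfolding y_def z_def by (simp add: mult.commute)
  have y0: "0 \<le> y" "y < f" using f2 by (simp_all add: y_def)
  have z0: "z \<ge> 0" using t f2 by (simp add: z_def pos_imp_zdiv_nonneg_iff)
  have zr: "z \<le> r"
  proof (rule ccontr)
    assume "\<not> z \<le> r" then have "z*f \<ge> (r+1)*f" using f2 by (intro mult_right_mono) auto
    then show False using tyz y0 t Ad sf by (simp add: algebra_simps)
  qed
  have zrs: "z = r \<Longrightarrow> y < s" using tyz t Ad by simp
  have ge: "good A B c f Mx t (y + a*f, z - a)" if "0 \<le> a" "a \<le> z" "(y + a*f)*B + (z-a)*c \<le> Mx" for a
    using that y0 tyz by (intro goodI) (auto simp: algebra_simps)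
  have geA: "good A B c f Mx t (y' , z')" if "y' \<ge> 0" "z' \<ge> 0" "y' + z'*f = t + A" "y'*B + z'*c \<le> Mx" for y' z'
    using that by (intro goodI) (auto simp: cong_iff_dvd_diff)
  show ?thesis
  proof (cases "z \<ge> 2")
    case True
    have W3: "(y + 2*f)*B + (z-2)*c \<le> Mx"
    proof (cases "z = r")
      case True
      have "(y + 2*f)*B \<le> (s - 1 + 2*f)*B" using zrs[OF True] B by (intro mult_right_mono) auto
      moreover have "(s - 1 + 2*f)*B + (r-2)*c \<le> (s-1)*B + (r+2)*c"
        using K2 by (simp add: algebra_simps)
      ultimately show ?thesis unfolding True using M1 by linarith
    next
      case False
      have "(y + 2*f)*B \<le> (3*f - 1)*B" using y0 B by (intro mult_right_mono) auto
      moreover have "(z-2)*c \<le> (r-3)*c" using False zr c0 by (intro mult_right_mono) auto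
      moreover have "(3*f - 1)*B + (r-3)*c \<le> (s-1)*B + (r+2)*c"
      proof -
        have "(3*f - s)*B \<le> (3*f)*B" using s1 B by (intro mult_right_mono) auto
        moreover have "5*c \<ge> 4*(f*B)" using K1 cd by linarith
        moreover have "f*B \<ge> 0" using f2 B by simp
        ultimately show ?thesis by (simp add: algebra_simps)
      qed
      ultimately show ?thesis using M1 by linarith
    qed
    have W2: "(y + 1*f)*B + (z-1)*c \<le> Mx"
    proof -
      have "(y + 1*f)*B + (z-1)*c = (y + 2*f)*B + (z-2)*c - g*A" by (simp add: cd algebra_simps)
      then show ?thesis using W3 gA by linarith
    qed
    have W1: "(y + 0*f)*B + (z-0)*c \<le> Mx"
    proof -
      have "(y + 0*f)*B + (z-0)*c = (y + 2*f)*B + (z-2)*c - 2*(g*A)" by (simp add: cd algebra_simps)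
      then show ?thesis using W3 gA by linarith
    qed
    show ?thesis
      by (rule ex3I[OF ge[OF _ _ W1] ge[OF _ _ W2] ge[OF _ _ W3]]) (use True f2 in auto)
  next
    case False
    then have "z = 0 \<or> z = 1" using z0 by auto
    then show ?thesis
    proof
      assume z1: "z = 1"
      have Wa: "(y + 0*f)*B + (z-0)*c \<le> Mx"
      proof -
        have "y*B \<le> (f-1)*B" using y0 B by (intro mult_right_mono) auto
        moreover have "c \<le> (r+1)*c" using c0 r2 by (simp add: algebra_simps)
        ultimately show ?thesis using M2 z1 by simp
      qed
      have Wb: "(y + 1*f)*B + (z-1)*c \<le> Mx"
      proof -
        have "(y+f)*B \<le> (2*f-1)*B" using y0 B by (intro mult_right_mono) auto
        moreover have "(2*f - 1)*B \<le> (f-1)*B + (r+1)*c"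
        proof -
          have "(r+1)*c \<ge> 2*c" using c0 r2 by (intro mult_right_mono) auto
          then show ?thesis using K2 by (simp add: algebra_simps)
        qed
        ultimately show ?thesis using M2 z1 by simp
      qed
      show ?thesis
      proof (cases "y + s \<ge> f")
        case True
        have "(y + s - f)*B + (r+2)*c \<le> Mx"
        proof -
          have "(y + s - f)*B \<le> (s-1)*B" using y0 B by (intro mult_right_mono) auto
          then show ?thesis using M1 by linarith
        qed
        then have "good A B c f Mx t (y + s - f, r+2)"
          using True r2 tyz z1 Ad by (intro geA) (auto simp: algebra_simps)
        note g3 = this
        show ?thesis
          by (rule ex3I[OF ge[OF _ _ Wa] ge[OF _ _ Wb] g3]) (use z1 f2 r2 in auto)
      next
        case False
        have "(y + s)*B + (r+1)*c \<le> Mx"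
        proof -
          have "(y + s)*B \<le> (f-1)*B" using False B by (intro mult_right_mono) auto
          then show ?thesis using M2 by linarith
        qed
        then have "good A B c f Mx t (y + s, r+1)"
          using s1 y0 r2 tyz z1 Ad by (intro geA) (auto simp: algebra_simps)
        note g3 = this
        show ?thesis
          by (rule ex3I[OF ge[OF _ _ Wa] ge[OF _ _ Wb] g3]) (use z1 f2 r2 in auto)
      qed
    next
      assume z1: "z = 0"
      have Wa: "(y + 0*f)*B + (z-0)*c \<le> Mx"
      proof -
        have "y*B \<le> (f-1)*B" using y0 B by (intro mult_right_mono) auto
        moreover have "0 \<le> (r+1)*c" using c0 r2 by simp
        ultimately show ?thesis using M2 z1 by simp
      qed
      show ?thesis
      proof (cases "y + s \<ge> f")
        case True
        have "(y + s - f)*B + (r+1)*c \<le> Mx"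
        proof -
          have "(y + s - f)*B \<le> (s-1)*B" using y0 B by (intro mult_right_mono) auto
          moreover have "(r+1)*c \<le> (r+2)*c" using c0 by (simp add: algebra_simps)
          ultimately show ?thesis using M1 by linarith
        qed
        then have g2: "good A B c f Mx t (y + s - f, r+1)"
          using True r2 tyz z1 Ad by (intro geA) (auto simp: algebra_simps)
        have "(y + s)*B + r*c \<le> Mx"
        proof -
          have "(y + s)*B \<le> (f - 1 + s)*B" using y0 B by (intro mult_right_mono) auto
          moreover have "(f - 1 + s)*B + r*c \<le> (s-1)*B + (r+2)*c" using K2 by (simp add: algebra_simps)
          ultimately show ?thesis using M1 by linarith
        qed
        then have g3: "good A B c f Mx t (y + s, r)"
          using s1 y0 r2 tyz z1 Ad by (intro geA) (auto simp: algebra_simps)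
        show ?thesis
          by (rule ex3I[OF ge[OF _ _ Wa] g2 g3]) (use z1 f2 r2 in auto)
      next
        case False
        have "(y + s)*B + r*c \<le> Mx"
        proof -
          have "(y + s)*B \<le> (f-1)*B" using False B by (intro mult_right_mono) auto
          moreover have "r*c \<le> (r+1)*c" using c0 by (simp add: algebra_simps)
          ultimately show ?thesis using M2 by linarith
        qed
        then have g2: "good A B c f Mx t (y + s, r)"
          using s1 y0 r2 tyz z1 Ad by (intro geA) (auto simp: algebra_simps)
        have "(y + s + f)*B + (r - 1)*c \<le> Mx"
        proof -
          have "(y + s + f)*B \<le> (2*f - 1)*B" using False B by (intro mult_right_mono) auto
          moreover have "(2*f - 1)*B + (r-1)*c \<le> (f-1)*B + (r+1)*c" using K2 by (simp add: algebra_simps)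
          ultimately show ?thesis using M2 by linarith
        qed
        then have g3: "good A B c f Mx t (y + s + f, r - 1)"
          using s1 y0 r2 tyz z1 Ad by (intro geA) (auto simp: algebra_simps)
        show ?thesis
          by (rule ex3I[OF ge[OF _ _ Wa] g2 g3]) (use z1 f2 r2 in auto)
      qed
    qed
  qed
qed



lemma exclF:
  fixes A B c f g r s u y z :: int
  assumes f2: "f \<ge> 2" and g1: "g \<ge> 1" and r2: "r \<ge> 2" and s1: "1 \<le> s" and sf: "s \<le> f"
    and Ad: "A = r*f + s" and cd: "c = f*B - g*A" and cfg: "c \<ge> f*g"
    and u: "u = 0 \<or> (u = 1 \<and> s < f)"
    and yz: "0 \<le> y" "0 \<le> z" "y + z*f = 2*f - u*s - 1 + j*A"
    and W: "j*B - z*g \<le> B - (r + 2 - u)*g - 1"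
  shows "j = 0 \<and> z \<le> 1"
proof -
  have "r*f \<ge> 2*f" using r2 f2 by (intro mult_right_mono) auto
  then have A: "A \<ge> 2*f + 1" using Ad s1 by linarith
  have us: "u*s \<ge> 0" "u*s \<le> s" "u*s \<le> f - u" using u s1 sf by auto
  have Y: "z*f \<le> 2*f - u*s - 1 + j*A" using yz by linarith
  have zf: "z*f \<ge> 0" using yz f2 by simp
  have j0: "j \<ge> 0"
  proof (rule ccontr)
    assume "\<not> j \<ge> 0" then have "j*A \<le> (-1)*A" using A f2 by (intro mult_right_mono) auto
    then show False using Y zf A us by linarith
  qed
  have j1: "j \<noteq> 1"
  proof
    assume j1: "j = 1"
    have "z \<le> r + 2 - u"
    proof (rule ccontr)
      assume "\<not> z \<le> r + 2 - u" then have "z*f \<ge> (r + 3 - u)*f" using f2 by (intro mult_right_mono) auto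
      then show False using Y j1 Ad us u sf by (auto simp: algebra_simps)
    qed
    then have "z*g \<le> (r + 2 - u)*g" using g1 by (intro mult_right_mono) auto
    then show False using W j1 u by (auto simp: algebra_simps)
  qed
  have j2: "\<not> j \<ge> 2"
  proof
    assume j2: "j \<ge> 2"
    define J where "J = j - 1"
    have J1: "J \<ge> 1" using j2 J_def by simp
    have D1: "f*(J*B + (r + 2 - u)*g + 1) \<le> f*(z*g)"
      using W f2 J_def by (intro mult_left_mono) (auto simp: algebra_simps)
    have D2: "g*(z*f) \<le> g*(2*f - u*s - 1 + j*A)" using Y g1 by (intro mult_left_mono) auto
    have e: "f*(z*g) - f*(J*B + (r + 2 - u)*g + 1) + (g*(2*f - u*s - 1 + j*A) - g*(z*f))
       = s*g - u*(s*g) + u*(f*g) - f - g - J*c"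
      by (simp add: cd Ad J_def algebra_simps)
    have "f*g \<ge> 0" using f2 g1 by simp
    then have "J*c \<ge> 1*c" using J1 cfg by (intro mult_right_mono) auto
    moreover have "s*g \<le> f*g" using sf g1 by (intro mult_right_mono) auto
    moreover have "s*g - u*(s*g) + u*(f*g) \<le> f*g" using u \<open>s*g \<le> f*g\<close> by auto
    ultimately show False using D1 D2 e cfg f2 g1 by linarith
  qed
  have "j = 0" using j0 j1 j2 by auto
  moreover have "z \<le> 1"
  proof (rule ccontr)
    assume "\<not> z \<le> 1" then have "z*f \<ge> 2*f" using f2 by (intro mult_right_mono) auto
    then show False using Y \<open>j = 0\<close> us s1 u by auto
  qed
  ultimately show ?thesis by simp
qed



lemma caseF:
  fixes A B c f g r s :: int
  assumes f2: "f \<ge> 2" and g1: "g \<ge> 1" and gf: "2*g \<le> f" and r2: "r \<ge> 2" and s1: "1 \<le> s" and sf: "s \<le> f"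
    and Ad: "A = r*f + s" and AB5: "5*A \<le> 2*B" and cd: "c = f*B - g*A" and cfg: "c \<ge> f*g"
    and cop: "coprime A B"
  shows "p_frobenius 2 [A,B,c] = (if s*B \<ge> g*A then (s-1)*B + (r+2)*c - A else (f-1)*B + (r+1)*c - A)"
proof -
  have "r*f \<ge> 2*f" using r2 f2 by (intro mult_right_mono) auto
  then have A: "A \<ge> 2*f + 1" using Ad s1 by linarith
  have B: "B > 0" using AB5 A f2 by linarith
  have K1: "5*(g*A) \<le> f*B"
  proof -
    have "g*(5*A) \<le> g*(2*B)" using AB5 g1 by (intro mult_left_mono) auto
    moreover have "(2*g)*B \<le> f*B" using gf B by (intro mult_right_mono) auto
    ultimately show ?thesis by (simp add: algebra_simps)
  qed
  have gA: "g*A > 0" using g1 A f2 by simp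
  have c0: "c > 0" using cfg f2 g1 by (smt (verit) mult_pos_pos)
  have ce: "[c = f*B] (mod A)" by (rule congI'[where k="-g"]) (simp add: cd algebra_simps)
  have dM: "((s-1)*B + (r+2)*c) - ((f-1)*B + (r+1)*c) = s*B - g*A" by (simp add: cd algebra_simps)
  have excl: "(y,z) = (2*f - u*s - 1, 0) \<or> (y,z) = (f - u*s - 1, 1)"
    if u: "u = 0 \<or> (u = 1 \<and> s < f)" and yz: "0 \<le> y" "0 \<le> z" "[y + z*f = 2*f - u*s - 1] (mod A)"
      and w: "y*B + z*c \<le> (2*f - u*s - 1)*B + A*(B - (r + 2 - u)*g - 1)" for u y z
  proof -
    obtain j where j: "y + z*f = 2*f - u*s - 1 + j*A" using cong_ex_int[OF yz(3)] by blast
    have yy: "y = 2*f - u*s - 1 + j*A - z*f" using j by simp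
    have "y*B + z*c = (2*f - u*s - 1)*B + A*(j*B - z*g)" by (simp only: yy) (simp add: cd algebra_simps)
    then have "A*(j*B - z*g) \<le> A*(B - (r + 2 - u)*g - 1)" using w by linarith
    then have W: "j*B - z*g \<le> B - (r + 2 - u)*g - 1" using A f2 by (simp add: mult_le_cancel_left)
    have "j = 0 \<and> z \<le> 1" by (rule exclF[OF f2 g1 r2 s1 sf Ad cd cfg u yz(1,2) j W])
    then have "j = 0" "z = 0 \<or> z = 1" using yz by auto
    then show ?thesis using yy by auto
  qed
  show ?thesis
  proof (cases "s*B \<ge> g*A")
    case True
    let ?M = "(s-1)*B + (r+2)*c"
    have "p_frobenius 2 [A,B,c] = ?M - A"
    proof (rule frame[where e=f and tz="2*f-1" and Pa="(2*f-1,0)" and Pb="(f-1,1)"])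
      show "A > 0" "B > 0" "c > 0" "coprime A B" "[c = f*B] (mod A)" using A f2 B c0 cop ce by auto
      show "[(2 * f - 1) * B = ?M - A] (mod A)"
        by (rule cong_sym, rule congI'[where k="B - (r + 2)*g - 1"]) (simp add: cd Ad algebra_simps)
      show "\<exists>p1 p2 p3. p1 \<noteq> p2 \<and> p1 \<noteq> p3 \<and> p2 \<noteq> p3 \<and>
        good A B c f ?M t p1 \<and> good A B c f ?M t p2 \<and> good A B c f ?M t p3" if "0 \<le> t" "t < A" for t
        by (rule coverF[OF f2 g1 gf r2 s1 sf Ad AB5 cd _ _ that]) (use dM True in linarith)+
      show "(y, z) = (2*f - 1, 0) \<or> (y, z) = (f - 1, 1)"
        if "0 \<le> y" "0 \<le> z" "[y + z * f = 2 * f - 1] (mod A)" "y * B + z * c \<le> ?M - A" for y z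
      proof -
        have "?M - A = (2*f - 0*s - 1)*B + A*(B - (r + 2 - 0)*g - 1)" by (simp add: cd Ad algebra_simps)
        then show ?thesis using excl[of 0 y z] that by simp
      qed
    qed
    then show ?thesis using True by simp
  next
    case False
    let ?M = "(f-1)*B + (r+1)*c"
    have sf': "s < f"
    proof (rule ccontr)
      assume "\<not> s < f" then have "s = f" using sf by simp
      then show False using False K1 gA by simp
    qed
    have "p_frobenius 2 [A,B,c] = ?M - A"
    proof (rule frame[where e=f and tz="2*f-s-1" and Pa="(2*f-s-1,0)" and Pb="(f-s-1,1)"])
      show "A > 0" "B > 0" "c > 0" "coprime A B" "[c = f*B] (mod A)" using A f2 B c0 cop ce by auto
      show "[(2 * f - s - 1) * B = ?M - A] (mod A)"
        by (rule cong_sym, rule congI'[where k="B - (r + 1)*g - 1"]) (simp add: cd Ad algebra_simps)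
      show "\<exists>p1 p2 p3. p1 \<noteq> p2 \<and> p1 \<noteq> p3 \<and> p2 \<noteq> p3 \<and>
        good A B c f ?M t p1 \<and> good A B c f ?M t p2 \<and> good A B c f ?M t p3" if "0 \<le> t" "t < A" for t
        by (rule coverF[OF f2 g1 gf r2 s1 sf Ad AB5 cd _ _ that]) (use dM False in linarith)+
      show "(y, z) = (2*f - s - 1, 0) \<or> (y, z) = (f - s - 1, 1)"
        if "0 \<le> y" "0 \<le> z" "[y + z * f = 2*f - s - 1] (mod A)" "y * B + z * c \<le> ?M - A" for y z
      proof -
        have "?M - A = (2*f - 1*s - 1)*B + A*(B - (r + 2 - 1)*g - 1)" by (simp add: cd Ad algebra_simps)
        then show ?thesis using excl[of 1 y z] that sf' by simp
      qed
    qed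
    then show ?thesis using False by simp
  qed
qed



lemma caseE:
  fixes A B c P Q R S :: int
  assumes S1: "S \<ge> 1" and SR: "S \<le> R" and R2: "R \<le> 2*S"
    and Qd: "Q = R + S" and Pd: "P = 2*R + S" and Ad: "A = 3*R + 2*S" and Bd: "B = 8*R + 5*S"
    and cd: "c = P*B - R*A" and cop: "coprime A B"
  shows "p_frobenius 2 [A,B,c] = (S - 1)*B + 3*c - A"
proof -
  let ?M = "(S - 1)*B + 3*c"
  have RR: "R*R \<le> 2*(R*S)" using R2 SR S1 by (simp add: mult_left_mono algebra_simps)
  have RS: "R*S \<ge> 0" "S*S \<ge> 0" "R*R \<ge> 0" using S1 SR by auto
  have ec: "c = 13*(R*R) + 16*(R*S) + 5*(S*S)" by (simp add: cd Pd Bd Ad algebra_simps)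
  have B0: "B > 0" using Bd S1 SR by simp
  have c0: "c > 0" using ec RS S1 SR by (smt (verit) mult_pos_pos)
  have I4: "(P - 1)*B + 2*c \<le> ?M"
  proof -
    have "?M - ((P - 1)*B + 2*c) = 6*(R*S) + 5*(S*S) - 3*(R*R)" by (simp add: cd Pd Bd Ad algebra_simps)
    then show ?thesis using RR RS by linarith
  qed
  have I2: "(A - 1)*B + c \<le> ?M"
  proof -
    have "?M - ((A - 1)*B + c) = 2*(R*R) + 9*(R*S) + 5*(S*S)" by (simp add: cd Pd Bd Ad algebra_simps)
    then show ?thesis using RR RS by linarith
  qed
  have I1: "(R - 1 + A)*B \<le> ?M"
  proof -
    have "?M - (R - 1 + A)*B = 7*(R*R) + 20*(R*S) + 10*(S*S)" by (simp add: cd Pd Bd Ad algebra_simps)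
    then show ?thesis using RR RS by linarith
  qed
  have I3: "(Q - 1)*B + 2*c \<le> ?M"
  proof -
    have "?M - ((Q - 1)*B + 2*c) = 5*(R*R) + 11*(R*S) + 5*(S*S)" by (simp add: cd Pd Bd Ad Qd algebra_simps)
    then show ?thesis using RR RS by linarith
  qed
  have I5: "(A - 1)*B \<le> ?M" using I2 c0 by linarith
  have ce: "[c = P*B] (mod A)" by (rule congI'[where k="-R"]) (simp add: cd algebra_simps)
  have A2: "A \<ge> 2" using Ad S1 SR by simp
  show ?thesis
  proof (rule frame[where e=P and tz="A-1" and Pa="(A-1,0)" and Pb="(Q-1,1)"])
    show "A > 0" "B > 0" "c > 0" "coprime A B" "[c = P*B] (mod A)" using A2 B0 c0 cop ce by auto
    show "[(A - 1) * B = ?M - A] (mod A)"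
      by (rule cong_sym, rule congI'[where k="B - 3*R - 1"]) (simp add: cd Pd Bd Ad algebra_simps)
  next
    fix t assume t: "0 \<le> t" "t < A"
    have wt: "t*B \<le> (A-1)*B" using t B0 by (intro mult_right_mono) auto
    have g0: "good A B c P ?M t (t,0)" using t wt I5 by (intro goodI) auto
    show "\<exists>p1 p2 p3. p1 \<noteq> p2 \<and> p1 \<noteq> p3 \<and> p2 \<noteq> p3 \<and>
        good A B c P ?M t p1 \<and> good A B c P ?M t p2 \<and> good A B c P ?M t p3"
    proof (cases "t < P")
      case tP: True
      have g1: "good A B c P ?M t (t + Q, 1)"
      proof (rule goodI)
        show "[t + Q + 1 * P = t] (mod A)" by (rule congI'[where k=1]) (simp add: Qd Pd Ad)
        have "(t + Q)*B \<le> (A - 1)*B" using tP B0 Qd Pd Ad by (intro mult_right_mono) auto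
        then show "(t + Q)*B + 1*c \<le> ?M" using I2 by linarith
      qed (use t Qd SR S1 in auto)
      show ?thesis
      proof (cases "t < R")
        case True
        have g2: "good A B c P ?M t (t + A, 0)"
        proof (rule goodI)
          have "(t + A)*B \<le> (R - 1 + A)*B" using True B0 by (intro mult_right_mono) auto
          then show "(t + A)*B + 0*c \<le> ?M" using I1 by linarith
        qed (use t A2 in \<open>auto simp: cong_iff_dvd_diff\<close>)
        show ?thesis by (rule ex3I[OF g0 g1 g2]) (use A2 in auto)
      next
        case False
        have g2: "good A B c P ?M t (t - R, 2)"
        proof (rule goodI)
          show "[t - R + 2 * P = t] (mod A)" by (rule congI'[where k=1]) (simp add: Qd Pd Ad)
          have "(t - R)*B \<le> (Q - 1)*B" using tP B0 Qd Pd by (intro mult_right_mono) auto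
          then show "(t - R)*B + 2*c \<le> ?M" using I3 by linarith
        qed (use t False in auto)
        show ?thesis by (rule ex3I[OF g0 g1 g2]) auto
      qed
    next
      case tP: False
      have g1: "good A B c P ?M t (t - P, 1)"
      proof (rule goodI)
        have "(t - P)*B \<le> (A - 1)*B" using t tP B0 Pd SR S1 by (intro mult_right_mono) auto
        then show "(t - P)*B + 1*c \<le> ?M" using I2 by linarith
      qed (use tP in auto)
      show ?thesis
      proof (cases "t - P < R")
        case True
        have g2: "good A B c P ?M t (t - P + Q, 2)"
        proof (rule goodI)
          show "[t - P + Q + 2 * P = t] (mod A)" by (rule congI'[where k=1]) (simp add: Qd Pd Ad)
          have "(t - P + Q)*B \<le> (P - 1)*B" using True B0 Qd Pd by (intro mult_right_mono) auto
          then show "(t - P + Q)*B + 2*c \<le> ?M" using I4 by linarith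
        qed (use tP Qd SR S1 in auto)
        show ?thesis by (rule ex3I[OF g0 g1 g2]) auto
      next
        case False
        have g2: "good A B c P ?M t (t - P - R, 3)"
        proof (rule goodI)
          show "[t - P - R + 3 * P = t] (mod A)" by (rule congI'[where k=1]) (simp add: Qd Pd Ad)
          have "(t - P - R)*B \<le> (S - 1)*B" using t False B0 Qd Pd Ad by (intro mult_right_mono) auto
          then show "(t - P - R)*B + 3*c \<le> ?M" by linarith
        qed (use False in auto)
        show ?thesis by (rule ex3I[OF g0 g1 g2]) auto
      qed
    qed
  next
    fix y z assume yz: "0 \<le> y" "0 \<le> z" "[y + z * P = A - 1] (mod A)" "y * B + z * c \<le> ?M - A"
    obtain j where j: "y + z*P = A - 1 + j*A" using cong_ex_int[OF yz(3)] by blast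
    have yy: "y = A - 1 + j*A - z*P" using j by simp
    have "y*B + z*c = (A - 1)*B + A*(j*B - z*R)" by (simp only: yy) (simp add: cd algebra_simps)
    moreover have "?M - A = (A - 1)*B + A*(B - 3*R - 1)" by (simp add: cd Pd Bd Ad algebra_simps)
    ultimately have "A*(j*B - z*R) \<le> A*(B - 3*R - 1)" using yz(4) by linarith
    then have W: "j*B - z*R \<le> B - 3*R - 1" using A2 by (simp add: mult_le_cancel_left)
    have Y: "z*P \<le> A - 1 + j*A" using j yz(1) by linarith
    have zP: "z*P \<ge> 0" using yz Pd S1 SR by simp
    have PA: "2*P \<ge> A" using Pd Ad SR S1 by simp
    have j0: "j \<ge> 0"
    proof (rule ccontr)
      assume "\<not> j \<ge> 0" then have "j*A \<le> (-1)*A" using A2 by (intro mult_right_mono) auto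
      then show False using Y zP by linarith
    qed
    have j1: "j \<noteq> 1"
    proof
      assume j1: "j = 1"
      have Y1: "z*P \<le> 2*A - 1" using Y by (simp add: j1)
      have W1: "B - z*R \<le> B - 3*R - 1" using W by (simp add: j1)
      have "z \<le> 3"
      proof (rule ccontr)
        assume "\<not> z \<le> 3" then have "z*P \<ge> 4*P" using Pd S1 SR by (intro mult_right_mono) auto
        then show False using Y1 PA by linarith
      qed
      then have "z*R \<le> 3*R" using S1 SR by (intro mult_right_mono) auto
      then show False using W1 by linarith
    qed
    have j2: "\<not> j \<ge> 2"
    proof
      assume j2: "j \<ge> 2"
      define J where "J = j - 1"
      have J1: "J \<ge> 1" using j2 J_def by simp
      have D1: "P*(J*B + 3*R + 1) \<le> P*(z*R)"
        using W J_def Pd S1 SR by (intro mult_left_mono) (auto simp: algebra_simps)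
      have D2: "R*(z*P) \<le> R*(A - 1 + j*A)" using Y S1 SR by (intro mult_left_mono) auto
      have e: "P*(z*R) - P*(J*B + 3*R + 1) + (R*(A - 1 + j*A) - R*(z*P))
         = 2*(R*Q) - P*R - R - P - J*c"
        by (simp add: cd Ad Pd Qd J_def algebra_simps)
      have "c \<ge> 0" using c0 by simp
      then have "J*c \<ge> 1*c" using J1 by (intro mult_right_mono) auto
      moreover have "R*Q \<le> P*R" using Qd Pd S1 SR by (simp add: algebra_simps)
      moreover have "R*Q \<le> c" using ec Qd RS by (simp add: algebra_simps)
      ultimately show False using D1 D2 e Pd S1 SR by linarith
    qed
    have "j = 0" using j0 j1 j2 by auto
    moreover have "z \<le> 1"
    proof (rule ccontr)
      assume "\<not> z \<le> 1" then have "z*P \<ge> 2*P" using Pd S1 SR by (intro mult_right_mono) auto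
      then show False using Y \<open>j = 0\<close> PA by simp
    qed
    ultimately have "z = 0 \<or> z = 1" "j = 0" using yz by auto
    then show "(y, z) = (A - 1, 0) \<or> (y, z) = (Q - 1, 1)" using yy Ad Pd Qd by auto
  qed
qed



lemma F_shift: "k \<ge> 2 \<Longrightarrow> F (i+k) = F k * F (i+2) - F (k-2) * F i"
proof -
  assume "k \<ge> 2"
  define m where "m = k - 2"
  have m: "k = m + 2" using \<open>k \<ge> 2\<close> by (simp add: m_def)
  have "F (i+k) = F ((m+1) + i + 1)" by (simp add: m ac_simps)
  also have "\<dots> = F (m+2) * F (i+1) + F (m+1) * F i" using F_add[of "m+1" i] by (simp add: ac_simps)
  also have "\<dots> = F (m+2) * F (i+2) - F m * F i"
    using F_plus2[of i] F_plus2[of m] by (simp add: algebra_simps)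
  finally show ?thesis by (simp add: m)
qed

lemma F_le2: "n \<ge> 1 \<Longrightarrow> F (n+1) \<le> 2 * F n"
proof -
  assume "n \<ge> 1"
  define m where "m = n - 1"
  have m: "n = m + 1" using \<open>n \<ge> 1\<close> by (simp add: m_def)
  have "F (m+2) = F (m+1) + F m" by (rule F_plus2)
  moreover have "F m \<le> F (m+1)" by (rule F_mono) simp
  ultimately show ?thesis by (simp add: m)
qed

lemma F_strict: "n \<ge> 2 \<Longrightarrow> F n < F (n+1)"
proof -
  assume "n \<ge> 2"
  define m where "m = n - 1"
  have m: "n = m + 1" "m \<ge> 1" using \<open>n \<ge> 2\<close> by (simp_all add: m_def)
  have "F (m+2) = F (m+1) + F m" by (rule F_plus2)
  moreover have "F m > 0" using m F_pos by simp
  ultimately show ?thesis by (simp add: m)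
qed

lemma part_a:
  assumes i: "i \<ge> 3" and k: "k \<ge> i + 3"
  shows "p_frobenius 2 [F i, F (i+2), F (i+k)] = (3 * F i - 1) * F (i+2) - F i"
proof (rule caseA[where e="F k"])
  define n where "n = i - 1"
  have n: "i = n + 1" "n \<ge> 2" using i by (simp_all add: n_def)
  define x where "x = F n"
  define y where "y = F (n+1)"
  have F2: "F (n+2) = y + x" using F_plus2[of n] by (simp add: x_def y_def)
  have F3: "F (n+3) = 2*y + x" using F_plus2[of "n+1"] F2 by (simp add: y_def add.commute numeral_3_eq_3)
  have yx: "y \<le> 2*x" using F_le2[of n] n by (simp add: x_def y_def)
  have x1: "x \<ge> 1" using F_pos[of n] n by (simp add: x_def)
  have y1: "y \<ge> 1" using F_pos[of "n+1"] by (simp add: y_def)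
  have Fc: "F (2*i+3) = (2*y+x)*(2*y+x) + (y+x)*(y+x)"
  proof -
    have e: "2*i+3 = (n+2)+(n+2)+1" using n by simp
    have "F (2*i+3) = F (n+2+1) * F (n+2+1) + F (n+2) * F (n+2)" unfolding e by (rule F_add)
    then show ?thesis using F2 F3 by (simp add: add.commute numeral_3_eq_3)
  qed
  have "F (2*i+3) \<le> F (i+k)" using k by (intro F_mono) simp
  moreover have "(3 * F i - 1) * F (i+2) - F i < F (2*i+3)"
  proof -
    have Fi: "F i = y" "F (i+2) = 2*y+x" using n F3 by (simp_all add: y_def add.commute numeral_3_eq_3)
    have yy: "y*y \<le> 2*(x*y)" using yx y1 by (simp add: mult_right_mono algebra_simps)
    have "(2*y+x)*(2*y+x) + (y+x)*(y+x) - ((3 * y - 1) * (2*y+x) - y) = 2*(x*x) + 3*(x*y) - y*y + x + 3*y"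
      by (simp add: algebra_simps)
    moreover have "x*x \<ge> 0" "x*y \<ge> 0" using x1 y1 by auto
    ultimately show ?thesis unfolding Fi Fc using yy x1 y1 by linarith
  qed
  ultimately show "(3 * F i - 1) * F (i+2) - F i < F (i+k)" by linarith
  show "F i \<ge> 1" using F_pos[of i] i by simp
  show "F (i+2) > 0" using F_pos[of "i+2"] by simp
  show "coprime (F i) (F (i+2))" by (rule F_coprime2)
  show "[F (i+k) = F k * F (i+2)] (mod F i)"
    by (rule congI'[where k="- F (k-2)"]) (use F_shift[of k i] k in simp)
qed



lemma part_b:
  assumes i: "i \<ge> 3"
  shows "(odd i \<longrightarrow>
       p_frobenius 2 [F i, F (i+2), F (2*i+2)] = (F (i-2) - 1) * F (i+2) + F (2*i+2) - F i)
    \<and> (even i \<longrightarrow>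
       p_frobenius 2 [F i, F (i+2), F (2*i+2)] = (F (i+2) - 1) * F (i+2) - F i)"
proof -
  define n where "n = i - 1"
  have n: "i = n + 1" "n \<ge> 2" using i by (simp_all add: n_def)
  define x where "x = F n"
  define y where "y = F (n+1)"
  have F2: "F (n+2) = y + x" using F_plus2[of n] by (simp add: x_def y_def)
  have F3: "F (n+3) = 2*y + x" using F_plus2[of "n+1"] F2 by (simp add: y_def add.commute numeral_3_eq_3)
  have x1: "x \<ge> 1" using F_pos[of n] n by (simp add: x_def)
  have xy: "x < y" using F_strict[of n] n by (simp add: x_def y_def)
  have Fi: "F i = y" "F (i+2) = 2*y + x" using n F3 by (simp_all add: y_def add.commute numeral_3_eq_3)
  have Fim2: "F (i-2) = y - x"
  proof -
    have "F (n-1+2) = F (n-1+1) + F (n-1)" by (rule F_plus2)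
    then show ?thesis using n by (simp add: x_def y_def)
  qed
  define c where "c = (2*y+x)*(y+x) + (y+x)*y"
  have Fc: "F (2*i+2) = c"
  proof -
    have e: "2*i+2 = (n+2)+(n+1)+1" using n by simp
    have "F (2*i+2) = F (n+2+1) * F (n+1+1) + F (n+2) * F (n+1)" unfolding e by (rule F_add)
    then show ?thesis using F2 F3 by (simp add: c_def y_def add.commute numeral_3_eq_3)
  qed
  have cas0: "(2*y+x)*(2*y+x) - (y - x)*(2*y+x) - c = -((-1)^n)"
  proof -
    have "F (n+2) * F n - (F (n+1))^2 = -((-1)^n)" by (rule F_cassini)
    then have "(y+x)*x - y*y = -((-1)^n)" using F2 by (simp add: x_def y_def power2_eq_square)
    moreover have "(2*y+x)*(2*y+x) - (y - x)*(2*y+x) - c = (y+x)*x - y*y" by (simp add: c_def algebra_simps)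
    ultimately show ?thesis by simp
  qed
  have ce: "[c = x*(2*y+x)] (mod y)" by (rule congI'[where k="3*y + 2*x"]) (simp add: c_def algebra_simps)
  have cop: "coprime y (2*y+x)" using F_coprime2[of i] Fi by simp
  have kc: "c - x*(2*y+x) = 3*(y*y) + 2*(x*y)" by (simp add: c_def algebra_simps)
  have AB: "y*(2*y+x) = 2*(y*y) + x*y" by (simp add: algebra_simps)
  have "1*1 \<le> y*y" by (rule mult_mono) (use x1 xy in auto)
  then have pos: "x*y \<ge> 0" "y*y \<ge> 1" using x1 xy by auto
  show ?thesis
  proof (intro conjI impI)
    assume "odd i"
    then have "even n" using n by simp
    then have cas: "(2*y+x)*(2*y+x) - (y - x)*(2*y+x) - c = -1" using cas0 by simp
    have "p_frobenius 2 [y, 2*y+x, c] = (y - x - 1)*(2*y+x) + c - y"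
    proof (rule caseB_odd[OF x1 xy refl cop ce _ _ cas])
      show "c - x*(2*y+x) \<ge> 0" using kc pos by linarith
      show "c - x*(2*y+x) < 2*(y*(2*y+x)) + y" using kc AB pos xy x1 by linarith
    qed
    then show "p_frobenius 2 [F i, F (i+2), F (2*i+2)] = (F (i-2) - 1) * F (i+2) + F (2*i+2) - F i"
      unfolding Fi Fc Fim2 .
  next
    assume "even i"
    then have "odd n" using n by simp
    then have cas: "(2*y+x)*(2*y+x) - (y - x)*(2*y+x) - c = 1" using cas0 by simp
    have "p_frobenius 2 [y, 2*y+x, c] = (2*y+x - 1)*(2*y+x) - y"
    proof (rule caseB_even[OF x1 xy refl cop ce _ _ cas])
      show "c \<ge> 0" using kc pos xy x1 by (smt (verit) mult_nonneg_nonneg)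
      show "c - x*(2*y+x) > y*(2*y+x) - y" using kc AB pos xy x1 by linarith
    qed
    then show "p_frobenius 2 [F i, F (i+2), F (2*i+2)] = (F (i+2) - 1) * F (i+2) - F i"
      unfolding Fi Fc .
  qed
qed

lemma part_c:
  assumes i: "i \<ge> 3"
  shows "p_frobenius 2 [F i, F (i+2), F (2*i+1)] = (F i - 1) * F (i+2) + F (2*i+1) - F i"
proof -
  define n where "n = i - 1"
  have n: "i = n + 1" "n \<ge> 2" using i by (simp_all add: n_def)
  define x where "x = F n"
  define y where "y = F (n+1)"
  have F2: "F (n+2) = y + x" using F_plus2[of n] by (simp add: x_def y_def)
  have F3: "F (n+3) = 2*y + x" using F_plus2[of "n+1"] F2 by (simp add: y_def add.commute numeral_3_eq_3)
  have x1: "x \<ge> 1" using F_pos[of n] n by (simp add: x_def)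
  have xy: "x < y" using F_strict[of n] n by (simp add: x_def y_def)
  have Fi: "F i = y" "F (i+2) = 2*y + x" using n F3 by (simp_all add: y_def add.commute numeral_3_eq_3)
  define c where "c = (y+x)*(y+x) + y*y"
  have Fc: "F (2*i+1) = c"
  proof -
    have e: "2*i+1 = (n+1)+(n+1)+1" using n by simp
    have "F (2*i+1) = F (n+1+1) * F (n+1+1) + F (n+1) * F (n+1)" unfolding e by (rule F_add)
    then show ?thesis using F2 by (simp add: c_def y_def add.commute)
  qed
  have ce: "[c = x*(2*y+x)] (mod y)" by (rule congI'[where k="2*y"]) (simp add: c_def algebra_simps)
  have cop: "coprime y (2*y+x)" using F_coprime2[of i] Fi by simp
  have kc: "c - x*(2*y+x) = 2*(y*y)" by (simp add: c_def algebra_simps)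
  have AB: "y*(2*y+x) = 2*(y*y) + x*y" by (simp add: algebra_simps)
  have "1*1 \<le> y*y" "1*1 \<le> x*y" by (rule mult_mono; use x1 xy in auto)+
  then have pos: "x*y \<ge> 1" "y*y \<ge> 1" "x*x \<ge> 0" using x1 xy by auto
  have cc: "c = x*x + 2*(x*y) + 2*(y*y)" by (simp add: c_def algebra_simps)
  have "p_frobenius 2 [y, 2*y+x, c] = (y - 1)*(2*y+x) + c - y"
  proof (rule caseC[OF x1 xy _ cop ce])
    show "2*y + x > 0" using x1 xy by simp
    show "y*(2*y+x) \<le> c" using AB cc pos by linarith
    show "x*(2*y+x) < c" using kc pos by linarith
    show "c - x*(2*y+x) < y*(2*y+x) + y" using kc AB pos xy x1 by linarith
  qed
  then show ?thesis unfolding Fi Fc .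
qed



lemma F_vals: "F 3 = 2" "F 4 = 3" "F 6 = 8" "F 7 = 13"
  by (simp_all add: F_def numeral_eq_Suc)

lemma part_e:
  assumes i: "i \<ge> 5"
  shows "p_frobenius 2 [F i, F (i+2), F (2*i-1)] = (F (i-4) - 1) * F (i+2) + 3 * F (2*i-1) - F i"
proof -
  define n where "n = i - 4"
  have n: "i = n + 4" "n \<ge> 1" using i by (simp_all add: n_def)
  define G where "G k = F (n + k)" for k
  have rec: "G (k+2) = G (k+1) + G k" for k unfolding G_def using F_plus2[of "n+k"] by (simp add: add.assoc)
  define S where "S = G 0"
  define R where "R = G 1"
  have G2: "G 2 = R + S" using rec[of 0] by (simp add: R_def S_def numeral_eq_Suc)
  have G3: "G 3 = 2*R + S" using rec[of 1] G2 by (simp add: R_def numeral_eq_Suc)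
  have G4: "G 4 = 3*R + 2*S" using rec[of 2] G2 G3 by (simp add: numeral_eq_Suc)
  have G5: "G 5 = 5*R + 3*S" using rec[of 3] G3 G4 by (simp add: numeral_eq_Suc)
  have G6: "G 6 = 8*R + 5*S" using rec[of 4] G4 G5 by (simp add: numeral_eq_Suc)
  have S1: "S \<ge> 1" using F_pos[of n] n by (simp add: S_def G_def)
  have SR: "S \<le> R" unfolding S_def R_def G_def by (rule F_mono) simp
  have R2: "R \<le> 2*S" using F_le2[of n] n by (simp add: S_def R_def G_def)
  define c where "c = (3*R + 2*S)*(3*R + 2*S) + (2*R + S)*(2*R + S)"
  have Fc: "F (2*i-1) = c"
  proof -
    have e: "2*i-1 = (n+3)+(n+3)+1" using n by simp
    have "F (2*i-1) = F (n+3+1) * F (n+3+1) + F (n+3) * F (n+3)" unfolding e by (rule F_add)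
    moreover have "F (n+3+1) = 3*R + 2*S" "F (n+3) = 2*R + S" using G3 G4 by (simp_all add: G_def add.commute)
    ultimately show ?thesis by (simp only: c_def)
  qed
  have Fs: "F i = 3*R + 2*S" "F (i+2) = 8*R + 5*S" "F (i-4) = S"
    using G4 G6 n by (simp_all add: G_def S_def add.commute)
  have cop: "coprime (3*R + 2*S) (8*R + 5*S)" using F_coprime2[of i] Fs by simp
  have "p_frobenius 2 [3*R + 2*S, 8*R + 5*S, c] = (S - 1)*(8*R + 5*S) + 3*c - (3*R + 2*S)"
    by (rule caseE[OF S1 SR R2 refl refl refl refl _ cop]) (simp add: c_def algebra_simps)
  then show ?thesis unfolding Fs Fc .
qed

lemma part_e4: "p_frobenius 2 [F 4, F 6, F 7] = 31"
proof -
  have "p_frobenius 2 [3, 8, 13] = 34 - 3"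
  proof (rule frame[where e=2 and tz=2 and Pa="(2,0)" and Pb="(0,1)"])
    show "(3::int) > 0" "(8::int) > 0" "(13::int) > 0" by simp_all
    show "coprime (3::int) 8" using F_coprime2[of 4] by (simp add: F_vals)
    show "[13 = 2 * 8] (mod (3::int))" by (simp add: cong_iff_dvd_diff)
    show "[2 * 8 = 34 - 3] (mod (3::int))" by (simp add: cong_iff_dvd_diff)
  next
    fix t :: int assume t: "0 \<le> t" "t < 3"
    then have "t = 0 \<or> t = 1 \<or> t = 2" by auto
    then show "\<exists>p1 p2 p3. p1 \<noteq> p2 \<and> p1 \<noteq> p3 \<and> p2 \<noteq> p3 \<and>
        good 3 8 13 2 34 t p1 \<and> good 3 8 13 2 34 t p2 \<and> good 3 8 13 2 34 t p3"
    proof (elim disjE)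
      assume "t = 0" then show ?thesis
        by (intro ex3I[of _ _ _ _ _ _ "(0,0)" "(3,0)" "(1,1)"]) (auto simp: good_def cong_iff_dvd_diff)
    next
      assume "t = 1" then show ?thesis
        by (intro ex3I[of _ _ _ _ _ _ "(1,0)" "(0,2)" "(4,0)"]) (auto simp: good_def cong_iff_dvd_diff)
    next
      assume "t = 2" then show ?thesis
        by (intro ex3I[of _ _ _ _ _ _ "(2,0)" "(0,1)" "(1,2)"]) (auto simp: good_def cong_iff_dvd_diff)
    qed
  next
    fix y z :: int assume yz: "0 \<le> y" "0 \<le> z" "[y + z * 2 = 2] (mod 3)" "y * 8 + z * 13 \<le> 34 - 3"
    have "z \<le> 2" "y \<le> 3" using yz by linarith+
    then have "z \<in> {0,1,2}" "y \<in> {0,1,2,3}" using yz by auto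
    then show "(y, z) = (2, 0) \<or> (y, z) = (0, 1)" using yz by (auto simp: cong_iff_dvd_diff)
  qed
  then show ?thesis by (simp add: F_vals)
qed



lemma part_f:
  assumes i: "i \<ge> 3" and k: "k \<ge> 3"
    and r2: "(F i - 1) div F k \<ge> 2"
  shows "p_frobenius 2 [F i, F (i+2), F (i+k)] =
          (if (F i - ((F i - 1) div F k) * F k) * F (i+2) \<ge> F (k-2) * F i
           then (F i - ((F i - 1) div F k) * F k - 1) * F (i+2) + (((F i - 1) div F k) + 2) * F (i+k) - F i
           else (F k - 1) * F (i+2) + (((F i - 1) div F k) + 1) * F (i+k) - F i)"
proof -
  define A where "A = F i"
  define B where "B = F (i+2)"
  define f where "f = F k"
  define g where "g = F (k-2)"
  define c where "c = F (i+k)"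
  define r where "r = (A - 1) div f"
  define s where "s = A - r*f"
  have f2: "f \<ge> 2" using F_mono[OF k] F_vals by (simp add: f_def)
  have g1: "g \<ge> 1" using F_pos[of "k-2"] k by (simp add: g_def)
  have gf: "2*g \<le> f"
  proof -
    have e: "k - 2 + 2 = k" using k by simp
    have "F (k-2+2) = F (k-2+1) + F (k-2)" by (rule F_plus2)
    then have "F k = F (k-2+1) + F (k-2)" unfolding e .
    moreover have "F (k-2) \<le> F (k-2+1)" by (rule F_mono) simp
    ultimately show ?thesis using k by (simp add: f_def g_def)
  qed
  have r2': "r \<ge> 2" using r2 by (simp add: r_def A_def f_def)
  have dm: "A - 1 = f*r + (A - 1) mod f" by (simp add: r_def)
  have md: "0 \<le> (A-1) mod f" "(A-1) mod f < f" using f2 by simp_all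
  have s1: "1 \<le> s" and sf: "s \<le> f" using dm md by (simp_all add: s_def algebra_simps)
  have Ad: "A = r*f + s" by (simp add: s_def)
  have AB5: "5*A \<le> 2*B"
  proof -
    have e1: "i - 1 + 2 = i + 1" "i - 1 + 1 = i" using i by simp_all
    have "F (i-1+2) = F (i-1+1) + F (i-1)" by (rule F_plus2)
    then have "F (i+1) = F i + F (i-1)" unfolding e1 .
    moreover have "F (i+2) = F (i+1) + F i" by (rule F_plus2)
    moreover have "F (i-1+1) \<le> 2 * F (i-1)" using F_le2[of "i-1"] i by simp
    then have "F i \<le> 2 * F (i-1)" unfolding e1 .
    ultimately show ?thesis using i by (simp add: A_def B_def)
  qed
  have cd: "c = f*B - g*A" using F_shift[of k i] k by (simp add: c_def f_def B_def g_def A_def)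
  have cfg: "c \<ge> f*g"
  proof -
    have "r*f \<ge> 2*f" using r2' f2 by (intro mult_right_mono) auto
    then have fA: "f < A" using Ad s1 f2 by linarith
    have ki: "k < i"
    proof (rule ccontr)
      assume "\<not> k < i" then have "F i \<le> F k" by (intro F_mono) simp
      then show False using fA by (simp add: A_def f_def)
    qed
    have "g \<le> F (i+1)" unfolding g_def by (rule F_mono) (use ki in simp)
    moreover have "B = F (i+1) + A" using F_plus2[of i] by (simp add: A_def B_def)
    ultimately have "B - g \<ge> A" by simp
    then have "f*(B - g) \<ge> f*A" using f2 by (intro mult_left_mono) auto
    moreover have "f*A \<ge> g*A" using gf g1 fA f2 by (intro mult_right_mono) auto
    ultimately show ?thesis using cd by (simp add: algebra_simps)
  qed
  have cop: "coprime A B" using F_coprime2[of i] by (simp add: A_def B_def)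
  have "p_frobenius 2 [A,B,c] = (if s*B \<ge> g*A then (s-1)*B + (r+2)*c - A else (f-1)*B + (r+1)*c - A)"
    by (rule caseF[OF f2 g1 gf r2' s1 sf Ad AB5 cd cfg cop])
  then show ?thesis by (simp add: A_def B_def c_def f_def g_def s_def r_def)
qed


theorem theorem3:
  fixes i k :: nat
  assumes hi: "i \<ge> 3" and hk: "k \<ge> 3"
  shows
   "(k \<ge> i + 3 \<longrightarrow>
       p_frobenius 2 [F i, F (i+2), F (i+k)] = (3 * F i - 1) * F (i+2) - F i)
    \<and> (odd i \<longrightarrow>
       p_frobenius 2 [F i, F (i+2), F (2*i+2)] = (F (i-2) - 1) * F (i+2) + F (2*i+2) - F i)
    \<and> (even i \<longrightarrow>
       p_frobenius 2 [F i, F (i+2), F (2*i+2)] = (F (i+2) - 1) * F (i+2) - F i)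
    \<and> p_frobenius 2 [F i, F (i+2), F (2*i+1)] = (F i - 1) * F (i+2) + F (2*i+1) - F i
    \<and> p_frobenius 2 [F i, F (i+2), F (2*i)] = (2 * F i - 1) * F (i+2) - F i
    \<and> (i \<ge> 5 \<longrightarrow>
       p_frobenius 2 [F i, F (i+2), F (2*i-1)] = (F (i-4) - 1) * F (i+2) + 3 * F (2*i-1) - F i)
    \<and> p_frobenius 2 [F 4, F 6, F 7] = F 6 + 2 * F 7 - F 4
    \<and> p_frobenius 2 [F 4, F 6, F 7] = 31
    \<and> (let r = (F i - 1) div F k in
        r \<ge> 2 \<longrightarrow>
        p_frobenius 2 [F i, F (i+2), F (i+k)] =
          (if (F i - r * F k) * F (i+2) \<ge> F (k-2) * F i
           then (F i - r * F k - 1) * F (i+2) + (r + 2) * F (i+k) - F i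
           else (F k - 1) * F (i+2) + (r + 1) * F (i+k) - F i))"
proof -
  have a: "k \<ge> i + 3 \<longrightarrow>
       p_frobenius 2 [F i, F (i+2), F (i+k)] = (3 * F i - 1) * F (i+2) - F i"
    using part_a[OF hi] by blast
  have e: "i \<ge> 5 \<longrightarrow>
       p_frobenius 2 [F i, F (i+2), F (2*i-1)] = (F (i-4) - 1) * F (i+2) + 3 * F (2*i-1) - F i"
    using part_e by blast
  have e4: "p_frobenius 2 [F 4, F 6, F 7] = F 6 + 2 * F 7 - F 4" "p_frobenius 2 [F 4, F 6, F 7] = 31"
    using part_e4 by (simp_all add: F_vals)
  have f: "(let r = (F i - 1) div F k in
        r \<ge> 2 \<longrightarrow>
        p_frobenius 2 [F i, F (i+2), F (i+k)] =
          (if (F i - r * F k) * F (i+2) \<ge> F (k-2) * F i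
           then (F i - r * F k - 1) * F (i+2) + (r + 2) * F (i+k) - F i
           else (F k - 1) * F (i+2) + (r + 1) * F (i+k) - F i))"
    unfolding Let_def using part_f[OF hi hk] by blast
  show ?thesis using a part_b[OF hi] part_c[OF hi] partD[OF hi] e e4 f by blast
qed

end
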